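(* Let $E(x)=2^{2^{2^x}}$. For any strictly increasing sequence of natural numbers $3\leq x_0<x_1<\dots<x_{E(x_0)+8}$ we have $\omega^3[x_0][x_1]\cdots[x_{E(x_0)+8}]>0$.
   Context: Ordinals are notations below $\varepsilon_0$, i.e. formal sums $\omega^{\alpha_0}+\dots+\omega^{\alpha_n}$ with non-increasing exponents (the empty sum is $0$), ordered lexicographically (Cantor normal form order). Write $1=\omega^0$, $\omega=\omega^1$, and $\omega^3=\omega^{1+1+1}$. Fundamental sequences, for $\alpha=\omega^{\alpha_0}+\dots+\omega^{\alpha_n}$ and $x\in\mathbb{N}$: $0[x]=0$. If $\alpha_n=0$ then $\alpha[x]=\omega^{\alpha_0}+\dots+\omega^{\alpha_{n-1}}$. If $\alpha_n=\beta+1$ then $\alpha[x]=\omega^{\alpha_0}+\dots+\omega^{\alpha_{n-1}}+\omega^\beta\cdot x$ ($x$ copies of $\omega^\beta$). If $\alpha_n$ is a nonzero non-successor then $\alpha[x]=\omega^{\alpha_0}+\dots+\omega^{\alpha_{n-1}}+\omega^{\alpha_n[x]}$. $\alpha[x_0]\cdots[x_R]$ denotes iterated application. *)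

theory Defs
  imports Main
begin

text \<open>Cantor normal form notations below epsilon_0:
  C [a0, ..., an] denotes omega^a0 + ... + omega^an (exponents intended non-increasing).\<close>
datatype cnf = C "cnf list"

definition zero_cnf :: cnf where "zero_cnf = C []"

fun cnf_less :: "cnf \<Rightarrow> cnf \<Rightarrow> bool"
and cnf_list_less :: "cnf list \<Rightarrow> cnf list \<Rightarrow> bool" where
  "cnf_less (C as) (C bs) = cnf_list_less as bs"
| "cnf_list_less [] [] = False"
| "cnf_list_less [] (b # bs) = True"
| "cnf_list_less (a # as) [] = False"
| "cnf_list_less (a # as) (b # bs) = (cnf_less a b \<or> (a = b \<and> cnf_list_less as bs))"

function fs :: "cnf \<Rightarrow> nat \<Rightarrow> cnf" where
  "fs (C as) x =
     (if as = [] then C []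
      else (case last as of
              C [] \<Rightarrow> C (butlast as)
            | C es \<Rightarrow>
                (if last es = C [] then C (butlast as @ replicate x (C (butlast es)))
                 else C (butlast as @ [fs (last as) x]))))"
  by pat_completeness auto
termination
proof (relation "measure (\<lambda>(a, x). size a)")
  show "wf (measure (\<lambda>(a, x). size a))" by simp
next
  fix as :: "cnf list" and x :: nat and x2 :: "cnf list"
  assume "as \<noteq> []"
  then have "last as \<in> set as" by simp
  then have "size (last as) < size (C as)"
    by (induct as) (auto simp: size_list_estimation')
  then show "((last as, x), C as, x) \<in> measure (\<lambda>(a, x). size a)" by simp
qed

definition fs_iter :: "cnf \<Rightarrow> nat list \<Rightarrow> cnf" where
  "fs_iter a xs = foldl fs a xs"

text \<open>1 = omega^0, 3 = 1+1+1, omega^3 = omega^(1+1+1).\<close>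
definition omega3 :: cnf where
  "omega3 = C [C [C [], C [], C []]]"

definition E :: "nat \<Rightarrow> nat" where
  "E x = 2 ^ (2 ^ (2 ^ x))"

end

theory Submission
  imports Defs
begin

definition W2 :: cnf where "W2 = C [C [], C []]"
definition W1 :: cnf where "W1 = C [C []]"

definition rep :: "nat \<times> nat \<times> nat \<Rightarrow> cnf" where
  "rep s = (case s of (a, b, c) \<Rightarrow> C (replicate a W2 @ replicate b W1 @ replicate c (C [])))"

fun stp :: "nat \<Rightarrow> nat \<times> nat \<times> nat \<Rightarrow> nat \<times> nat \<times> nat" where
  "stp y (a, b, c) = (if c > 0 then (a, b, c - 1) else if b > 0 then (a, b - 1, y)
     else if a > 0 then (a - 1, y, 0) else (0, 0, 0))"

fun run :: "(nat \<Rightarrow> nat) \<Rightarrow> nat \<Rightarrow> nat \<Rightarrow> nat \<times> nat \<times> nat \<Rightarrow> nat \<times> nat \<times> nat" where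
  "run x t 0 s = s"
| "run x t (Suc k) s = run x (Suc t) k (stp (x t) s)"

lemma fs_rep: "fs (rep s) y = rep (stp y s)"
proof -
  obtain a b c where s: "s = (a, b, c)" by (cases s) auto
  show ?thesis
  proof (cases c)
    case (Suc c')
    have "rep s = C ((replicate a W2 @ replicate b W1 @ replicate c' (C [])) @ [C []])"
      using Suc s by (simp add: rep_def replicate_append_same[symmetric])
    then show ?thesis using Suc s by (simp only:) (simp add: rep_def butlast_append)
  next
    case 0
    show ?thesis
    proof (cases b)
      case (Suc b')
      have "rep s = C ((replicate a W2 @ replicate b' W1) @ [C [C []]])"
        using Suc 0 s by (simp add: rep_def W1_def replicate_append_same[symmetric])
      then show ?thesis using Suc 0 s by (simp only:) (simp add: rep_def W1_def butlast_append)
    next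
      case zb: 0
      show ?thesis
      proof (cases a)
        case (Suc a')
        have "rep s = C (replicate a' W2 @ [C [C [], C []]])"
          using Suc 0 zb s by (simp add: rep_def W2_def replicate_append_same[symmetric])
        then show ?thesis using Suc 0 zb s by (simp only:) (simp add: rep_def W1_def W2_def butlast_append)
      next
        case za: 0
        then show ?thesis using 0 zb s by (simp add: rep_def)
      qed
    qed
  qed
qed

lemma fs_omega3: "fs omega3 y = rep (y, 0, 0)"
  by (simp add: omega3_def rep_def W2_def)

lemma foldl_rep: "foldl fs (rep s) (map x [t..<t+k]) = rep (run x t k s)"
proof (induction k arbitrary: t s)
  case 0
  then show ?case by simp
next
  case (Suc k)
  have "[t..<t + Suc k] = t # [Suc t..<Suc t + k]" by (simp add: upt_conv_Cons)
  then show ?case using Suc[where t="Suc t" and s="stp (x t) s"] by (simp add: fs_rep)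
qed

lemma run_add: "run x t (k1 + k2) s = run x (t + k1) k2 (run x t k1 s)"
  by (induction k1 arbitrary: t s) auto

lemma run_zero: "run x t k (0, 0, 0) = (0, 0, 0)"
  by (induction k arbitrary: t) auto

lemma run_c: "run x t c (a, b, c) = (a, b, 0)"
  by (induction c arbitrary: t) auto

lemma run_b:
  assumes "\<And>i. x i \<ge> i"
  shows "\<exists>k. run x t k (a, b + m, 0) = (a, m, 0) \<and> t + k \<ge> 2 ^ b * t"
proof (induction b arbitrary: t)
  case 0
  then show ?case by (rule exI[of _ 0]) simp
next
  case (Suc b)
  obtain k where k: "run x (t + (1 + x t)) k (a, b + m, 0) = (a, m, 0)"
      "t + (1 + x t) + k \<ge> 2 ^ b * (t + (1 + x t))"
    using Suc[of "t + (1 + x t)"] by blast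
  have r: "run x t (1 + x t) (a, Suc b + m, 0) = (a, b + m, 0)"
    using run_c[where x=x and t="Suc t" and a=a and b="b+m" and c="x t"] by simp
  have "run x t ((1 + x t) + k) (a, Suc b + m, 0) = (a, m, 0)"
    using r k(1) by (simp only: run_add)
  moreover have "2 ^ Suc b * t \<le> 2 ^ b * (t + (1 + x t))"
  proof -
    have "2 * t \<le> t + (1 + x t)" using assms[of t] by simp
    then have "2 ^ b * (2 * t) \<le> 2 ^ b * (t + (1 + x t))" by (rule mult_le_mono2)
    then show ?thesis by (simp add: mult.assoc mult.left_commute)
  qed
  ultimately show ?case using k(2) by (intro exI[of _ "(1 + x t) + k"]) auto
qed

lemma run_a:
  assumes "\<And>i. x i \<ge> i"
  shows "\<exists>k. run x t k (Suc a, 0, 0) = (a, 0, 0) \<and> t + k \<ge> 2 ^ (x t) * Suc t"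
proof -
  obtain k where k: "run x (Suc t) k (a, x t + 0, 0) = (a, 0, 0)" "Suc t + k \<ge> 2 ^ (x t) * Suc t"
    using run_b[OF assms, where t="Suc t" and a=a and b="x t" and m=0] by blast
  have "run x t (Suc k) (Suc a, 0, 0) = (a, 0, 0)" using k(1) by simp
  then show ?thesis using k(2) by (intro exI[of _ "Suc k"]) simp
qed

lemma rep_pos: "s \<noteq> (0, 0, 0) \<Longrightarrow> cnf_less zero_cnf (rep s)"
proof -
  assume "s \<noteq> (0, 0, 0)"
  then obtain a b c where s: "s = (a, b, c)" and ne: "a \<noteq> 0 \<or> b \<noteq> 0 \<or> c \<noteq> 0"
    by (cases s) auto
  have "replicate a W2 @ replicate b W1 @ replicate c (C []) \<noteq> []" using ne by auto
  then obtain y ys where "replicate a W2 @ replicate b W1 @ replicate c (C []) = y # ys"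
    by (meson neq_Nil_conv)
  then show ?thesis by (simp add: s rep_def zero_cnf_def)
qed

lemma numeric:
  fixes x0 :: nat
  assumes "3 \<le> x0"
  shows "E x0 + 9 \<le> 2 ^ 2 ^ 2 ^ (x0 + 1)"
proof -
  define p :: nat where "p = 2 ^ x0"
  have p8: "p \<ge> 8" unfolding p_def using power_increasing[of 3 x0 "2::nat"] assms by simp
  have q: "(2::nat) ^ p \<ge> 256" using power_increasing[of 8 p "2::nat"] p8 by simp
  have "2 * (2::nat) ^ p \<le> 2 ^ p * 2 ^ p" using mult_le_mono1[of 2 "2^p" "(2::nat)^p"] q by simp
  then have "(2::nat) ^ p + 4 \<le> 2 ^ p * 2 ^ p" using q by linarith
  also have "\<dots> = 2 ^ (2 ^ (x0 + 1))" by (simp add: p_def power_add[symmetric] mult_2[symmetric])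
  finally have h: "2 ^ p + 4 \<le> (2::nat) ^ (2 ^ (x0 + 1))" .
  have e1: "(2::nat) ^ (2 ^ p + 4) = 16 * 2 ^ 2 ^ p" by (simp add: power_add)
  have e2: "E x0 = 2 ^ 2 ^ p" by (simp add: E_def p_def)
  have e3: "(1::nat) \<le> 2 ^ 2 ^ p" by simp
  have "E x0 + 9 \<le> 2 ^ (2 ^ p + 4)" using e1 e2 e3 by linarith
  also have "\<dots> \<le> 2 ^ 2 ^ 2 ^ (x0 + 1)" by (rule power_increasing[OF h]) simp
  finally show ?thesis .
qed

theorem lemma2p8:
  fixes x :: "nat \<Rightarrow> nat"
  assumes "3 \<le> x 0"
    and "\<forall>i < E (x 0) + 8. x i < x (Suc i)"
  shows "cnf_less zero_cnf (fs_iter omega3 (map x [0..<E (x 0) + 9]))"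
proof -
  define N where "N = E (x 0) + 9"
  define y where "y i = (if i < N then x i else x 0 + i)" for i
  have xg: "i < N \<Longrightarrow> x i \<ge> x 0 + i" for i
  proof (induction i)
    case 0 then show ?case by simp
  next
    case (Suc i)
    then have "x i < x (Suc i)" using assms(2) by (simp add: N_def)
    then show ?case using Suc by simp
  qed
  have yg: "y i \<ge> x 0 + i" for i using xg by (simp add: y_def)
  have yi: "y i \<ge> i" for i using yg[of i] by simp
  have y0: "y 0 = x 0" by (simp add: y_def N_def)
  have mapeq: "map x [0..<N] = map y [0..<N]" by (simp add: y_def)
  have N1: "1 + (N - 1) = N" by (simp add: N_def)
  have Nc: "[0..<N] = 0 # [1..<1 + (N - 1)]" unfolding N1 using upt_conv_Cons[of 0 N] by (simp add: N_def)
  have it1: "fs_iter omega3 (map y [0..<N]) = foldl fs (fs omega3 (y 0)) (map y [1..<1+(N-1)])"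
    by (simp only: fs_iter_def Nc list.map foldl_Cons)
  have it: "fs_iter omega3 (map x [0..<N]) = rep (run y 1 (N - 1) (x 0, 0, 0))"
    unfolding mapeq it1 fs_omega3 y0 by (rule foldl_rep)
  obtain a where a: "x 0 = Suc (Suc (Suc a))" using assms(1)
    by (metis add_Suc_right add_Suc_shift add_cancel_right_left le_Suc_ex numeral_3_eq_3 plus_1_eq_Suc)
  obtain k1 where k1: "run y 1 k1 (Suc (Suc (Suc a)), 0, 0) = (Suc (Suc a), 0, 0)"
      "1 + k1 \<ge> 2 ^ (y 1) * Suc 1"
    using run_a[OF yi] by blast
  define t1 where "t1 = 1 + k1"
  obtain k2 where k2: "run y t1 k2 (Suc (Suc a), 0, 0) = (Suc a, 0, 0)"
      "t1 + k2 \<ge> 2 ^ (y t1) * Suc t1"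
    using run_a[OF yi] by blast
  define t2 where "t2 = t1 + k2"
  have s3: "run y t2 1 (Suc a, 0, 0) = (a, y t2 - 1 + 1, 0)" using yg[of t2] assms(1) by simp
  obtain k3 where k3: "run y (t2 + 1) k3 (a, y t2 - 1 + 1, 0) = (a, 1, 0)"
      "t2 + 1 + k3 \<ge> 2 ^ (y t2 - 1) * (t2 + 1)"
    using run_b[OF yi] by blast
  define K where "K = k1 + k2 + 1 + k3"
  have runK: "run y 1 K (x 0, 0, 0) = (a, 1, 0)"
    unfolding K_def a run_add using k1(1) k2(1) s3 k3(1) by (simp add: t1_def t2_def)
  have "2 ^ (x 0 + 1) \<le> t1"
  proof -
    have "(2::nat) ^ (x 0 + 1) \<le> 2 ^ y 1" using yg[of 1] by (intro power_increasing) auto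
    then show ?thesis using k1(2) t1_def by simp
  qed
  moreover have "2 ^ t1 \<le> t2"
  proof -
    have "(2::nat) ^ t1 \<le> 2 ^ y t1" using yi[of t1] by (intro power_increasing) auto
    also have "\<dots> \<le> 2 ^ (y t1) * Suc t1" by simp
    finally show ?thesis using k2(2) t2_def by simp
  qed
  moreover have "2 ^ t2 \<le> 1 + K"
  proof -
    have "(2::nat) ^ t2 \<le> 2 ^ (y t2 - 1)" using yg[of t2] assms(1) by (intro power_increasing) auto
    also have "\<dots> \<le> 2 ^ (y t2 - 1) * (t2 + 1)" by simp
    finally show ?thesis using k3(2) t2_def t1_def K_def by simp
  qed
  ultimately have "2 ^ 2 ^ 2 ^ (x 0 + 1) \<le> 1 + K"
    by (meson order_trans power_increasing one_le_numeral)
  then have "N \<le> 1 + K" using numeric[OF assms(1)] N_def by simp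
  then obtain d where d: "K = (N - 1) + d" by (metis le_add_diff_inverse le_diff_conv add.commute)
  have "run y 1 (N - 1) (x 0, 0, 0) \<noteq> (0, 0, 0)"
  proof
    assume "run y 1 (N - 1) (x 0, 0, 0) = (0, 0, 0)"
    then have "run y 1 K (x 0, 0, 0) = (0, 0, 0)" unfolding d run_add by (simp add: run_zero)
    then show False using runK by simp
  qed
  then show ?thesis using it rep_pos N_def by simp
qed

end
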